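(* Let $W$ be an ordered vector space which is monotone complete and which carries a faithful normal positive linear functional $\psi$. Let $J$ be a non-empty, upper bounded, upward directed subset of $W$. Then there exists an increasing sequence $(j_n)_{n\geq 1}$ in $J$ such that $\sup_n j_n = \sup J$ (suprema taken in $W$). Moreover, every increasing sequence $(j_n)_{n\ge 1}$ in $J$ satisfying \[ \sup_{n\geq 1}\psi(j_n) = \sup_{j\in J}\psi(j) \] satisfies $\sup_n j_n = \sup J$.
   Context: An ordered vector space $W$ is called monotone complete if every non-empty upper bounded upward directed subset of $W$ has a supremum in $W$. A positive linear functional $\psi$ on $W$ is called faithful if $\psi(a)>0$ for every $a\in W_+\setminus\{0\}$, where $W_+$ is the set of positive elements of $W$. A positive linear map $\phi$ between monotone complete ordered vector spaces is called normal if $\phi(\sup J)=\sup_{j\in J}\phi(j)$ for every non-empty upper bounded upward directed subset $J$ of the domain. (Example: $W$ the Hermitian part of a $\sigma$-finite von Neumann algebra.) *)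

theory Defs
  imports Complex_Main
begin

definition upper_bound :: "'a::order set \<Rightarrow> 'a \<Rightarrow> bool" where
  "upper_bound J u \<longleftrightarrow> (\<forall>j\<in>J. j \<le> u)"

definition is_sup :: "'a::order set \<Rightarrow> 'a \<Rightarrow> bool" where
  "is_sup J s \<longleftrightarrow> upper_bound J s \<and> (\<forall>u. upper_bound J u \<longrightarrow> s \<le> u)"

definition upper_bounded :: "'a::order set \<Rightarrow> bool" where
  "upper_bounded J \<longleftrightarrow> (\<exists>u. upper_bound J u)"

definition upward_directed :: "'a::order set \<Rightarrow> bool" where
  "upward_directed J \<longleftrightarrow> (\<forall>a\<in>J. \<forall>b\<in>J. \<exists>c\<in>J. a \<le> c \<and> b \<le> c)"

definition monotone_complete :: "'a::ordered_real_vector itself \<Rightarrow> bool" where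
  "monotone_complete _ \<longleftrightarrow>
     (\<forall>J::'a set. J \<noteq> {} \<and> upper_bounded J \<and> upward_directed J \<longrightarrow> (\<exists>s. is_sup J s))"

definition positive_functional :: "('a::ordered_real_vector \<Rightarrow> real) \<Rightarrow> bool" where
  "positive_functional \<psi> \<longleftrightarrow> linear \<psi> \<and> (\<forall>a. 0 \<le> a \<longrightarrow> 0 \<le> \<psi> a)"

definition faithful :: "('a::ordered_real_vector \<Rightarrow> real) \<Rightarrow> bool" where
  "faithful \<psi> \<longleftrightarrow> (\<forall>a. 0 \<le> a \<and> a \<noteq> 0 \<longrightarrow> 0 < \<psi> a)"

definition normal :: "('a::ordered_real_vector \<Rightarrow> real) \<Rightarrow> bool" where
  "normal \<psi> \<longleftrightarrow> (\<forall>J::'a set. \<forall>s. J \<noteq> {} \<and> upper_bounded J \<and> upward_directed J \<and> is_sup J s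
      \<longrightarrow> is_sup (\<psi> ` J) (\<psi> s))"

end

theory Submission
  imports Defs
begin

lemma is_sup_real:
  fixes A :: "real set"
  assumes "is_sup A x" "A \<noteq> {}"
  shows "Sup A = x"
  using assms unfolding is_sup_def upper_bound_def
  by (intro cSup_eq_non_empty) auto

lemma psi_mono:
  assumes "positive_functional \<psi>" "a \<le> b"
  shows "\<psi> a \<le> \<psi> b"
proof -
  have "linear \<psi>" using assms(1) unfolding positive_functional_def by simp
  hence "\<psi> (b - a) = \<psi> b - \<psi> a" by (simp add: linear_diff)
  moreover have "0 \<le> \<psi> (b - a)" using assms unfolding positive_functional_def by simp
  ultimately show ?thesis by simp
qed

lemma part2:
  fixes \<psi> :: "'a::ordered_real_vector \<Rightarrow> real" and J :: "'a set"
  assumes mc: "monotone_complete TYPE('a)"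
    and pos: "positive_functional \<psi>" and fa: "faithful \<psi>" and no: "normal \<psi>"
    and J: "J \<noteq> {}" "upper_bounded J" "upward_directed J"
    and j: "\<forall>n. j n \<in> J" "incseq j"
    and eq: "(SUP n. \<psi> (j n)) = (SUP x\<in>J. \<psi> x)"
    and s: "is_sup J s"
  shows "is_sup (range j) s"
proof -
  have ub: "upper_bound (range j) s" using s j unfolding is_sup_def upper_bound_def by auto
  have dir: "upward_directed (range j)"
    unfolding upward_directed_def
  proof (intro ballI)
    fix x y assume "x \<in> range j" "y \<in> range j"
    then obtain a b where "x = j a" "y = j b" by auto
    thus "\<exists>c\<in>range j. x \<le> c \<and> y \<le> c"
      using j(2) by (intro bexI[of _ "j (max a b)"]) (auto simp: incseq_def)
  qed
  obtain t where t: "is_sup (range j) t"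
    using mc ub dir unfolding monotone_complete_def upper_bounded_def by blast
  have ts: "t \<le> s" using t ub unfolding is_sup_def by blast
  have "is_sup (\<psi> ` range j) (\<psi> t)"
    using no t ub dir unfolding normal_def upper_bounded_def by blast
  hence "Sup (\<psi> ` range j) = \<psi> t" by (intro is_sup_real) auto
  moreover have "Sup (\<psi> ` range j) = (SUP n. \<psi> (j n))" by (simp add: image_comp)
  moreover have "is_sup (\<psi> ` J) (\<psi> s)" using no J s unfolding normal_def by blast
  hence "Sup (\<psi> ` J) = \<psi> s" using J by (intro is_sup_real) auto
  ultimately have "\<psi> t = \<psi> s" using eq by simp
  moreover have "linear \<psi>" using pos unfolding positive_functional_def by simp
  ultimately have "\<psi> (s - t) = 0" by (simp add: linear_diff)
  moreover have "0 \<le> s - t" using ts by simp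
  ultimately have "s - t = 0" using fa unfolding faithful_def by (metis less_irrefl)
  hence "s = t" by simp
  thus ?thesis using t by simp
qed

theorem theorem1:
  fixes \<psi> :: "'a::ordered_real_vector \<Rightarrow> real" and J :: "'a set"
  assumes "monotone_complete TYPE('a)"
    and "positive_functional \<psi>" and "faithful \<psi>" and "normal \<psi>"
    and "J \<noteq> {}" and "upper_bounded J" and "upward_directed J"
  shows "(\<exists>j::nat \<Rightarrow> 'a. (\<forall>n. j n \<in> J) \<and> incseq j \<and>
            (\<forall>s. is_sup J s \<longrightarrow> is_sup (range j) s))
       \<and> (\<forall>j::nat \<Rightarrow> 'a. (\<forall>n. j n \<in> J) \<and> incseq j \<and>
            (SUP n. \<psi> (j n)) = (SUP x\<in>J. \<psi> x)
            \<longrightarrow> (\<forall>s. is_sup J s \<longrightarrow> is_sup (range j) s))"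
proof (rule conjI)
  show P2: "\<forall>j::nat \<Rightarrow> 'a. (\<forall>n. j n \<in> J) \<and> incseq j \<and>
            (SUP n. \<psi> (j n)) = (SUP x\<in>J. \<psi> x)
            \<longrightarrow> (\<forall>s. is_sup J s \<longrightarrow> is_sup (range j) s)"
    using part2[OF assms] by blast
  obtain s where s: "is_sup J s"
    using assms(1,5,6,7) unfolding monotone_complete_def by blast
  have psis: "is_sup (\<psi> ` J) (\<psi> s)" using assms(4,5,6,7) s unfolding normal_def by blast
  hence SJ: "(SUP x\<in>J. \<psi> x) = \<psi> s" using assms(5) by (intro is_sup_real) auto
  have "\<forall>n. \<exists>a\<in>J. \<psi> s - inverse (real (Suc n)) < \<psi> a"
  proof
    fix n
    show "\<exists>a\<in>J. \<psi> s - inverse (real (Suc n)) < \<psi> a"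
    proof (rule ccontr)
      assume "\<not> ?thesis"
      hence "upper_bound (\<psi> ` J) (\<psi> s - inverse (real (Suc n)))"
        unfolding upper_bound_def by (auto simp: not_less)
      hence "\<psi> s \<le> \<psi> s - inverse (real (Suc n))" using psis unfolding is_sup_def by blast
      thus False by simp
    qed
  qed
  then obtain a where a: "\<And>n. a n \<in> J" "\<And>n. \<psi> s - inverse (real (Suc n)) < \<psi> (a n)"
    by metis
  have "\<forall>x\<in>J. \<forall>y\<in>J. \<exists>z. z \<in> J \<and> x \<le> z \<and> y \<le> z"
    using assms(7) unfolding upward_directed_def by blast
  then obtain c where c: "\<And>x y. x \<in> J \<Longrightarrow> y \<in> J \<Longrightarrow> c x y \<in> J \<and> x \<le> c x y \<and> y \<le> c x y"
    by metis
  define j where "j = rec_nat (a 0) (\<lambda>n x. c x (a (Suc n)))"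
  have j0: "j 0 = a 0" and jS: "\<And>n. j (Suc n) = c (j n) (a (Suc n))" unfolding j_def by simp_all
  have jJ: "\<forall>n. j n \<in> J"
  proof
    fix n show "j n \<in> J" by (induction n) (use a c j0 jS in auto)
  qed
  have inc: "incseq j" by (rule incseq_SucI) (use c jJ a jS in auto)
  have aj: "a n \<le> j n" for n by (cases n) (use c jJ a jS j0 in auto)
  have bnd: "\<psi> (j n) \<le> \<psi> s" for n
    using psi_mono[OF assms(2)] s jJ unfolding is_sup_def upper_bound_def by blast
  have "(SUP n. \<psi> (j n)) = \<psi> s"
  proof (rule cSup_eq_non_empty)
    show "range (\<lambda>n. \<psi> (j n)) \<noteq> {}" by simp
    show "\<And>x. x \<in> range (\<lambda>n. \<psi> (j n)) \<Longrightarrow> x \<le> \<psi> s" using bnd by auto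
    fix y assume H: "\<And>x. x \<in> range (\<lambda>n. \<psi> (j n)) \<Longrightarrow> x \<le> y"
    show "\<psi> s \<le> y"
    proof (rule ccontr)
      assume "\<not> \<psi> s \<le> y"
      then obtain n where n: "inverse (real (Suc n)) < \<psi> s - y"
        using reals_Archimedean[of "\<psi> s - y"] by auto
      have "\<psi> (a n) \<le> \<psi> (j n)" using psi_mono[OF assms(2) aj] .
      moreover have "\<psi> (j n) \<le> y" using H by auto
      ultimately show False using a(2)[of n] n by linarith
    qed
  qed
  hence "(SUP n. \<psi> (j n)) = (SUP x\<in>J. \<psi> x)" using SJ by simp
  thus "\<exists>j::nat \<Rightarrow> 'a. (\<forall>n. j n \<in> J) \<and> incseq j \<and>
            (\<forall>s. is_sup J s \<longrightarrow> is_sup (range j) s)"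
    using P2 jJ inc by blast
qed

end
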